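(* Let $\beta>0$ and $N\in\mathbb{N}$. Define $W:[0,\infty)\to\mathbb{R}$ by $W(y)=\log(4y^2+1)-y\arctan(2y)$ and, for real $t$, $$P_{N,\beta}(t)=\prod_{j=1}^{N-1}\prod_{k=1}^{\lfloor j\beta/2\rfloor}\frac{\big(1+it+\frac{j\beta}{2}-k\big)\big(1+\frac{j\beta}{2}-k\big)}{\big(1+\frac{it}{2}+\frac{j\beta}{2}-k\big)^2},$$ where an empty product equals $1$. Let $c_3=\frac{\beta/8-1}{2N}+\frac38\beta+\frac32$. Then for $|t|\geq(N-1)\beta/2$, $$|P_{N,\beta}(t)|^2\leq\exp\Big(-\frac{1}{2\beta}t^2\,W\Big(\frac{N\beta}{2|t|}\Big)\Big)\exp(2c_3N).$$
   Context: $\lfloor x\rfloor$ denotes the integer part of $x$. *)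

theory Defs
  imports "HOL-Analysis.Analysis"
begin

definition W :: "real \<Rightarrow> real" where
  "W y = ln (4 * y^2 + 1) - y * arctan (2 * y)"

definition P :: "nat \<Rightarrow> real \<Rightarrow> real \<Rightarrow> complex" where
  "P N \<beta> t = (\<Prod>j\<in>{1..<N}. \<Prod>k\<in>{1..nat \<lfloor>real j * \<beta> / 2\<rfloor>}.
      ((1 + \<i> * of_real t + of_real (real j * \<beta> / 2 - real k))
        * of_real (1 + real j * \<beta> / 2 - real k))
      / (1 + \<i> * of_real t / 2 + of_real (real j * \<beta> / 2 - real k))^2)"

definition c3 :: "nat \<Rightarrow> real \<Rightarrow> real" where
  "c3 N \<beta> = (\<beta> / 8 - 1) / (2 * real N) + 3/8 * \<beta> + 3/2"

end

theory Submission
  imports Defs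
begin

definition phi :: "real \<Rightarrow> real \<Rightarrow> real" where
  "phi T u = T^2 * (8 * u^2 - T^2) / (T^2 + 4 * u^2)^2"

definition gg :: "real \<Rightarrow> real \<Rightarrow> real" where
  "gg T u = -(3/2) * u * T^2 / (T^2 + 4 * u^2) + T / 4 * arctan (2 * u / T)"

lemma gg_deriv:
  assumes "T > 0"
  shows "(gg T has_real_derivative phi T u) (at u)"
proof -
  have pos: "T^2 + 4 * u^2 > 0" using assms by (simp add: add_pos_nonneg)
  have pos2: "T * T + 4 * (u * u) > 0" using pos by (simp add: power2_eq_square)
  have a: "((\<lambda>u. -(3/2) * u * T^2) has_real_derivative (-(3/2) * T^2)) (at u)"
    by (auto intro!: derivative_eq_intros)
  have b: "((\<lambda>u. T^2 + 4 * u^2) has_real_derivative (8 * u)) (at u)"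
    by (auto intro!: derivative_eq_intros)
  have c: "((\<lambda>u. -(3/2) * u * T^2 / (T^2 + 4 * u^2)) has_real_derivative
      ((-(3/2) * T^2) * (T^2 + 4 * u^2) - (-(3/2) * u * T^2) * (8 * u)) / ((T^2 + 4 * u^2) * (T^2 + 4 * u^2))) (at u)"
    using DERIV_divide[OF a b] pos by simp
  have num: "(-(3/2) * T^2) * (T^2 + 4 * u^2) - (-(3/2) * u * T^2) * (8 * u) = -(3/2) * T^2 * (T^2 - 4*u^2)"
    by (simp add: algebra_simps power2_eq_square)
  have d1: "((\<lambda>u. -(3/2) * u * T^2 / (T^2 + 4 * u^2)) has_real_derivative
      (-(3/2) * T^2 * (T^2 - 4*u^2) / (T^2 + 4*u^2)^2)) (at u)"
    using c unfolding num by (simp add: power2_eq_square)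
  have d2: "((\<lambda>u. T / 4 * arctan (2 * u / T)) has_real_derivative
      (T^2 / (2 * (T^2 + 4*u^2)))) (at u)"
    using assms pos pos2
    apply (auto intro!: derivative_eq_intros)
    apply (simp add: field_simps power2_eq_square)
    done
  have "phi T u = -(3/2) * T^2 * (T^2 - 4*u^2) / (T^2 + 4*u^2)^2 + T^2 / (2 * (T^2 + 4*u^2))"
  proof -
    define D where "D = T^2 + 4*u^2"
    have Dp: "D > 0" using pos D_def by simp
    have e: "T^2 / (2 * D) = (T^2 * D / 2) / D^2" using Dp by (simp add: power2_eq_square)
    have n: "-(3/2) * T^2 * (T^2 - 4*u^2) + T^2 * D / 2 = T^2 * (8 * u^2 - T^2)"
      unfolding D_def by (simp add: algebra_simps)
    have "-(3/2) * T^2 * (T^2 - 4*u^2) / D^2 + T^2 / (2 * D) = T^2 * (8 * u^2 - T^2) / D^2"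
      unfolding e add_divide_distrib[symmetric] n ..
    then show ?thesis unfolding phi_def D_def by simp
  qed
  then show ?thesis unfolding gg_def using DERIV_add[OF d1 d2] by simp
qed

lemma phi_lower: assumes "T > 0" shows "-1 \<le> phi T u"
proof -
  have pos: "T^2 + 4 * u^2 > 0" using assms by (simp add: add_pos_nonneg)
  have h: "0 \<le> 16 * (u^2 * u^2) + 16 * (T^2 * u^2)" by simp
  have "-( (T^2 + 4 * u^2)^2) \<le> T^2 * (8 * u^2 - T^2)"
    using h by (simp add: power2_eq_square algebra_simps)
  then show ?thesis unfolding phi_def using pos by (simp add: field_simps)
qed

lemma phi_upper: assumes "T > 0" shows "phi T u \<le> 1/3"
proof -
  have pos: "T^2 + 4 * u^2 > 0" using assms by (simp add: add_pos_nonneg)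
  have "3 * (T^2 * (8 * u^2 - T^2)) \<le> (T^2 + 4 * u^2)^2"
    using zero_le_square[of "T^2 - 2*u^2"]
    by (simp add: power2_eq_square algebra_simps)
  then show ?thesis unfolding phi_def using pos by (simp add: field_simps)
qed


lemma F_mono:
  fixes S p q :: real
  assumes "S > 0" "0 \<le> p" "p \<le> q" "q \<le> 2 * S"
  shows "S * (2 * p - S) / (S + p)^2 \<le> S * (2 * q - S) / (S + q)^2"
proof -
  have id: "(2 * q - S) * (S + p)^2 - (2 * p - S) * (S + q)^2 = (q - p) * (4 * S^2 - 2 * p * q + S * (p + q))"
    by (simp add: algebra_simps power2_eq_square)
  have h1: "0 \<le> p * (2 * S - q)" using assms by simp
  have h2: "0 \<le> q * (2 * S - p)" using assms by simp
  have h3: "0 \<le> S * (4 * S - p - q)" using assms by simp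
  have "0 \<le> 4 * S^2 - 2 * p * q + S * (p + q)" using h1 h2 h3 by (simp add: power2_eq_square algebra_simps)
  then have "0 \<le> (q - p) * (4 * S^2 - 2 * p * q + S * (p + q))" using assms by simp
  then have key: "(2 * p - S) * (S + q)^2 \<le> (2 * q - S) * (S + p)^2" using id by linarith
  have "S * ((2 * p - S) * (S + q)^2) \<le> S * ((2 * q - S) * (S + p)^2)"
    using key assms by (intro mult_left_mono) auto
  moreover have "(S + p)^2 > 0" "(S + q)^2 > 0" using assms by auto
  ultimately show ?thesis by (simp add: divide_simps algebra_simps)
qed

lemma F_anti:
  fixes S p q :: real
  assumes "S > 0" "2 * S \<le> p" "p \<le> q"
  shows "S * (2 * q - S) / (S + q)^2 \<le> S * (2 * p - S) / (S + p)^2"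
proof -
  have id: "(2 * q - S) * (S + p)^2 - (2 * p - S) * (S + q)^2 = (q - p) * (4 * S^2 - 2 * p * q + S * (p + q))"
    by (simp add: algebra_simps power2_eq_square)
  have h1: "0 \<le> (p - 2 * S) * (q - 2 * S)" using assms by simp
  have h2: "0 \<le> S * (q - p)" using assms by simp
  have h3: "0 \<le> (p - 2 * S) * S" using assms by simp
  have "4 * S^2 - 2 * p * q + S * (p + q) \<le> 0" using h1 h2 h3 by (simp add: power2_eq_square algebra_simps)
  then have "(q - p) * (4 * S^2 - 2 * p * q + S * (p + q)) \<le> 0" using assms by (simp add: mult_nonneg_nonpos)
  then have key: "(2 * q - S) * (S + p)^2 \<le> (2 * p - S) * (S + q)^2" using id by linarith
  have "S * ((2 * q - S) * (S + p)^2) \<le> S * ((2 * p - S) * (S + q)^2)"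
    using key assms by (intro mult_left_mono) auto
  moreover have "(S + p)^2 > 0" "(S + q)^2 > 0" using assms by auto
  ultimately show ?thesis by (simp add: divide_simps algebra_simps)
qed

lemma phi_alt: "phi T u = T^2 * (2 * (4 * u^2) - T^2) / (T^2 + 4 * u^2)^2"
  unfolding phi_def by simp

lemma phi_mono:
  assumes "T > 0" "0 \<le> v" "v \<le> w" "2 * w^2 \<le> T^2"
  shows "phi T v \<le> phi T w"
  unfolding phi_alt
  using assms by (intro F_mono) (auto intro: power_mono)

lemma phi_anti:
  assumes "T > 0" "0 \<le> v" "v \<le> w" "T^2 \<le> 2 * v^2"
  shows "phi T w \<le> phi T v"
  unfolding phi_alt
  using assms by (intro F_anti) (auto intro: power_mono)

lemma gg_lower:
  assumes "T > 0" "x \<le> y" "\<And>s. x \<le> s \<Longrightarrow> s \<le> y \<Longrightarrow> m \<le> phi T s"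
  shows "m * (y - x) \<le> gg T y - gg T x"
proof (cases "x = y")
  case True then show ?thesis by simp
next
  case False
  then have "x < y" using assms by simp
  from MVT2[OF this, of "gg T" "phi T"] gg_deriv[OF assms(1)]
  obtain z where "x < z" "z < y" "gg T y - gg T x = (y - x) * phi T z" by blast
  moreover have "m \<le> phi T z" using assms calculation by auto
  ultimately show ?thesis using \<open>x < y\<close> by (simp add: mult.commute mult_right_mono)
qed

lemma gg_zero: "gg T 0 = 0" unfolding gg_def by simp


definition cc :: "real \<Rightarrow> real" where "cc T = T / sqrt 2"

definition Psi :: "real \<Rightarrow> real \<Rightarrow> real" where
  "Psi T x = gg T x + phi T (min x (cc T))"

lemma cc_sq: "2 * (cc T)^2 = T^2"
  unfolding cc_def by (simp add: power_divide)

lemma below_cc: assumes "0 \<le> w" "w \<le> cc T" shows "2 * w^2 \<le> T^2"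
proof -
  have "w^2 \<le> (cc T)^2" using assms by (intro power_mono) auto
  then show ?thesis using cc_sq[of T] by linarith
qed

lemma above_cc: assumes "T > 0" "cc T \<le> v" shows "T^2 \<le> 2 * v^2"
proof -
  have "0 \<le> cc T" using assms unfolding cc_def by simp
  then have "(cc T)^2 \<le> v^2" using assms by (intro power_mono) auto
  then show ?thesis using cc_sq[of T] by linarith
qed

lemma cc_pos: "T > 0 \<Longrightarrow> cc T > 0" unfolding cc_def by simp

lemma psi_step:
  assumes T: "T > 0" and u: "1 \<le> u"
  shows "phi T u \<le> Psi T u - Psi T (u - 1)"
proof -
  let ?c = "cc T"
  have cpos: "?c > 0" using cc_pos[OF T] .
  consider (i) "u \<le> ?c" | (ii) "?c \<le> u - 1" | (iii) "u - 1 < ?c" "?c < u" by linarith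
  then show ?thesis
  proof cases
    case i
    have "phi T (u - 1) * (u - (u - 1)) \<le> gg T u - gg T (u - 1)"
    proof (rule gg_lower[OF T])
      fix s assume "u - 1 \<le> s" "s \<le> u"
      then show "phi T (u - 1) \<le> phi T s"
        using i u by (intro phi_mono[OF T] below_cc) auto
    qed simp
    then show ?thesis using i unfolding Psi_def by simp
  next
    case ii
    have "phi T u * (u - (u - 1)) \<le> gg T u - gg T (u - 1)"
    proof (rule gg_lower[OF T])
      fix s assume "u - 1 \<le> s" "s \<le> u"
      then show "phi T u \<le> phi T s"
        using ii u cpos by (intro phi_anti[OF T] above_cc[OF T]) auto
    qed simp
    then show ?thesis using ii unfolding Psi_def by simp
  next
    case iii
    let ?m = "min (phi T (u - 1)) (phi T u)"
    have "?m * (u - (u - 1)) \<le> gg T u - gg T (u - 1)"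
    proof (rule gg_lower[OF T])
      fix s assume s: "u - 1 \<le> s" "s \<le> u"
      show "?m \<le> phi T s"
      proof (cases "s \<le> ?c")
        case True
        then have "phi T (u - 1) \<le> phi T s"
          using s u by (intro phi_mono[OF T] below_cc) auto
        then show ?thesis by linarith
      next
        case False
        then have "phi T u \<le> phi T s"
          using s u cpos by (intro phi_anti[OF T] above_cc[OF T]) auto
        then show ?thesis by linarith
      qed
    qed simp
    moreover have "phi T (u - 1) \<le> phi T ?c"
      using iii u by (intro phi_mono[OF T] below_cc) auto
    moreover have "phi T u \<le> phi T ?c"
      using iii u cpos by (intro phi_anti[OF T] above_cc[OF T]) auto
    ultimately show ?thesis using iii unfolding Psi_def by (simp add: min_def split: if_splits)
  qed
qed

lemma telescope:
  assumes T: "T > 0"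
  shows "real m \<le> a \<Longrightarrow> (\<Sum>k\<in>{1..m}. phi T (1 + a - real k)) \<le> Psi T a - Psi T (a - real m)"
proof (induction m)
  case 0 then show ?case by simp
next
  case (Suc m)
  have "phi T (1 + a - real (Suc m)) \<le> Psi T (a - real m) - Psi T (a - real m - 1)"
    using psi_step[OF T, of "a - real m"] Suc.prems by simp
  moreover have "(\<Sum>k\<in>{1..m}. phi T (1 + a - real k)) \<le> Psi T a - Psi T (a - real m)"
    using Suc by simp
  ultimately show ?case by (simp add: algebra_simps)
qed

lemma inner_bound:
  assumes T: "T > 0" and a: "0 \<le> a"
  shows "(\<Sum>k\<in>{1..nat \<lfloor>a\<rfloor>}. phi T (1 + a - real k)) \<le> gg T a + 7/3"
proof -
  let ?m = "nat \<lfloor>a\<rfloor>"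
  have m1: "real ?m \<le> a" using a by linarith
  have m2: "a - real ?m < 1" using a by linarith
  let ?f = "a - real ?m"
  have f0: "0 \<le> ?f" using m1 by simp
  have "(-1) * (?f - 0) \<le> gg T ?f - gg T 0"
    using f0 by (intro gg_lower[OF T]) (auto intro: phi_lower[OF T])
  then have gf: "- ?f \<le> gg T ?f" by (simp add: gg_zero)
  have "(\<Sum>k\<in>{1..?m}. phi T (1 + a - real k)) \<le> Psi T a - Psi T ?f"
    using telescope[OF T m1] .
  also have "\<dots> \<le> gg T a + 7/3"
    unfolding Psi_def using gf m2 phi_lower[OF T, of "min ?f (cc T)"] phi_upper[OF T, of "min a (cc T)"]
    by linarith
  finally show ?thesis .
qed


definition RR :: "real \<Rightarrow> real \<Rightarrow> real \<Rightarrow> real" where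
  "RR T \<beta> s = - (1 / (2 * \<beta>)) * T^2 * W (s * \<beta> / (2 * T))"

lemma W_deriv: "(W has_real_derivative (6 * y / (1 + 4 * y^2) - arctan (2 * y))) (at y)"
proof -
  have pos: "4 * y^2 + 1 > 0" by (simp add: add_nonneg_pos)
  have d: "(W has_real_derivative (8 * y / (4 * y^2 + 1) - (arctan (2 * y) + y * (2 / (1 + (2 * y)^2))))) (at y)"
    unfolding W_def using pos
    by (auto intro!: derivative_eq_intros simp: power2_eq_square field_simps)
  have q1: "1 + (2 * y)^2 = 4 * y^2 + 1" "1 + 4 * y^2 = 4 * y^2 + 1" by (simp_all add: power_mult_distrib)
  have "\<And>D. D > 0 \<Longrightarrow> 8 * y / D - y * (2 / D) = 6 * y / D" by (simp add: field_simps)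
  then have "8 * y / (4 * y^2 + 1) - y * (2 / (1 + (2 * y)^2)) = 6 * y / (1 + 4 * y^2)"
    unfolding q1 using pos by blast
  then have eqW: "8 * y / (4 * y^2 + 1) - (arctan (2 * y) + y * (2 / (1 + (2 * y)^2))) = 6 * y / (1 + 4 * y^2) - arctan (2 * y)"
    by linarith
  show ?thesis using d[unfolded eqW] .
qed

lemma RR_deriv:
  assumes T: "T > 0" and b: "\<beta> > 0"
  shows "(RR T \<beta> has_real_derivative gg T (s * \<beta> / 2)) (at s)"
proof -
  let ?y = "s * \<beta> / (2 * T)"
  have d1: "((\<lambda>s. s * \<beta> / (2 * T)) has_real_derivative (\<beta> / (2 * T))) (at s)"
    using T by (auto intro!: derivative_eq_intros)
  have d2: "((\<lambda>s. W (s * \<beta> / (2 * T))) has_real_derivative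
      (6 * ?y / (1 + 4 * ?y^2) - arctan (2 * ?y)) * (\<beta> / (2 * T))) (at s)"
    using DERIV_chain2[OF W_deriv d1] .
  have d3: "(RR T \<beta> has_real_derivative
      - (1 / (2 * \<beta>)) * T^2 * ((6 * ?y / (1 + 4 * ?y^2) - arctan (2 * ?y)) * (\<beta> / (2 * T)))) (at s)"
    unfolding RR_def using DERIV_cmult[OF d2, of "- (1 / (2 * \<beta>)) * T^2"] .
  define a where "a = s * \<beta> / 2"
  define X where "X = T^2 + 4 * a^2"
  define y where "y = s * \<beta> / (2 * T)"
  have ya: "y = a / T" unfolding y_def a_def by simp
  have Xp: "X > 0" unfolding X_def using T by (simp add: add_pos_nonneg)
  have q: "1 + 4 * y^2 = X / T^2" unfolding ya X_def using T by (simp add: field_simps)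
  have "6 * y / (1 + 4 * y^2) = 6 * y / (X / T^2)" by (simp only: q)
  also have "\<dots> = 6 * a * T / X" unfolding ya using Xp T by (simp add: field_simps power2_eq_square)
  finally have e1: "6 * y / (1 + 4 * y^2) = 6 * a * T / X" .
  have e2: "2 * y = 2 * a / T" unfolding ya by simp
  have k: "- (1 / (2 * \<beta>)) * T^2 * (\<beta> / (2 * T)) = - T / 4"
    using T b by (simp add: field_simps power2_eq_square)
  have "- (1 / (2 * \<beta>)) * T^2 * ((6 * y / (1 + 4 * y^2) - arctan (2 * y)) * (\<beta> / (2 * T)))
      = (- (1 / (2 * \<beta>)) * T^2 * (\<beta> / (2 * T))) * (6 * a * T / X - arctan (2 * a / T))"
    unfolding e1 e2 by (simp only: mult_ac)
  also have "\<dots> = - (T / 4) * (6 * a * T / X) + T / 4 * arctan (2 * a / T)"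
    unfolding k by (simp add: algebra_simps)
  also have "\<dots> = -(3/2) * a * T^2 / X + T / 4 * arctan (2 * a / T)"
    using Xp by (simp add: field_simps power2_eq_square)
  also have "\<dots> = gg T a" unfolding gg_def X_def by simp
  finally show ?thesis using d3 unfolding y_def a_def by simp
qed

lemma RR_zero: "RR T \<beta> 0 = 0" unfolding RR_def W_def by simp

lemma RR_step:
  assumes T: "T > 0" and b: "\<beta> > 0" and j: "0 \<le> j"
  shows "gg T (j * \<beta> / 2) - \<beta> / 2 \<le> RR T \<beta> (j + 1) - RR T \<beta> j"
proof -
  have "j < j + 1" by simp
  from MVT2[OF this, of "RR T \<beta>" "\<lambda>s. gg T (s * \<beta> / 2)"] RR_deriv[OF T b]
  obtain z where z: "j < z" "z < j + 1" "RR T \<beta> (j + 1) - RR T \<beta> j = (j + 1 - j) * gg T (z * \<beta> / 2)"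
    by blast
  have le: "j * \<beta> / 2 \<le> z * \<beta> / 2" using z b by (simp add: mult_right_mono)
  have "(-1) * (z * \<beta> / 2 - j * \<beta> / 2) \<le> gg T (z * \<beta> / 2) - gg T (j * \<beta> / 2)"
    using le by (intro gg_lower[OF T]) (auto intro: phi_lower[OF T])
  moreover have "(z * \<beta> / 2 - j * \<beta> / 2) \<le> \<beta> / 2"
  proof -
    have "(z - j) * \<beta> \<le> 1 * \<beta>" using z b by (intro mult_right_mono) auto
    then show ?thesis by (simp add: algebra_simps)
  qed
  ultimately show ?thesis using z by simp
qed

lemma outer_bound:
  assumes T: "T > 0" and b: "\<beta> > 0"
  shows "(\<Sum>j\<in>{1..<n}. gg T (real j * \<beta> / 2)) \<le> RR T \<beta> (real n) + real n * \<beta> / 2"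
proof (induction n)
  case 0 then show ?case by (simp add: RR_zero)
next
  case (Suc n)
  have st: "gg T (real n * \<beta> / 2) - \<beta> / 2 \<le> RR T \<beta> (real n + 1) - RR T \<beta> (real n)"
    using RR_step[OF T b, of "real n"] by simp
  show ?case
  proof (cases "n = 0")
    case True
    then show ?thesis using st by (simp add: RR_zero gg_zero)
  next
    case False
    then have eq: "(\<Sum>j\<in>{1..<Suc n}. gg T (real j * \<beta> / 2)) = (\<Sum>j\<in>{1..<n}. gg T (real j * \<beta> / 2)) + gg T (real n * \<beta> / 2)"
      by (simp add: sum.atLeastLessThan_Suc)
    have e2: "real (Suc n) * \<beta> / 2 = real n * \<beta> / 2 + \<beta> / 2" by (simp add: algebra_simps)
    have e3: "RR T \<beta> (real (Suc n)) = RR T \<beta> (real n + 1)" by (simp add: add.commute)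
    show ?thesis unfolding eq e2 e3 using Suc.IH st by linarith
  qed
qed


lemma factor:
  fixes d e t :: real
  assumes e: "e = 1 + d" "e > 0"
  shows "(cmod ((1 + \<i> * of_real t + of_real d) * of_real e / (1 + \<i> * of_real t / 2 + of_real d)^2))^2
    = 1 + phi \<bar>t\<bar> e"
proof -
  have n1: "(cmod (1 + \<i> * of_real t + of_real d))^2 = e^2 + t^2"
    unfolding cmod_power2 using e by simp
  have n2: "(cmod (1 + \<i> * of_real t / 2 + of_real d))^2 = e^2 + t^2 / 4"
    unfolding cmod_power2 using e by (simp add: power_divide)
  have p2: "e^2 + t^2/4 > 0" using e by (simp add: add_pos_nonneg)
  have "(cmod ((1 + \<i> * of_real t + of_real d) * of_real e / (1 + \<i> * of_real t / 2 + of_real d)^2))^2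
      = (cmod (1 + \<i> * of_real t + of_real d))^2 * e^2 / ((cmod (1 + \<i> * of_real t / 2 + of_real d))^2)^2"
    by (simp add: norm_mult norm_divide norm_power power_mult_distrib power_divide)
  also have "\<dots> = (e^2 + t^2) * e^2 / (e^2 + t^2/4)^2" unfolding n1 n2 ..
  also have "\<dots> = 1 + phi \<bar>t\<bar> e"
  proof -
    have X: "t^2 + 4 * e^2 > 0" using e by (simp add: add_nonneg_pos)
    have h: "e^2 + t^2 / 4 = (t^2 + 4 * e^2) / 4" by simp
    have l: "(e^2 + t^2) * e^2 / (e^2 + t^2/4)^2 = 16 * ((e^2 + t^2) * e^2) / (t^2 + 4 * e^2)^2"
      unfolding h power_divide by simp
    have r: "1 + phi \<bar>t\<bar> e = ((t^2 + 4 * e^2)^2 + t^2 * (8 * e^2 - t^2)) / (t^2 + 4 * e^2)^2"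
      unfolding phi_def add_divide_distrib using X by simp
    have n: "16 * ((e^2 + t^2) * e^2) = (t^2 + 4 * e^2)^2 + t^2 * (8 * e^2 - t^2)"
      by (simp add: power2_eq_square algebra_simps)
    show ?thesis unfolding l r n ..
  qed
  finally show ?thesis .
qed

theorem lemma3p5:
  fixes \<beta> t :: real and N :: nat
  assumes "\<beta> > 0" and "N \<ge> 1"
    and "\<bar>t\<bar> \<ge> (real N - 1) * \<beta> / 2"
  shows "(cmod (P N \<beta> t))^2
    \<le> exp (- (1 / (2 * \<beta>)) * t^2 * W (real N * \<beta> / (2 * \<bar>t\<bar>))) * exp (2 * c3 N \<beta> * real N)"
proof (cases "t = 0")
  case True
  then have "(real N - 1) * \<beta> \<le> 0" using assms(1,3) by simp
  then have "real N - 1 \<le> 0" using assms(1) by (simp add: mult_le_0_iff)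
  then have N1: "N = 1" using assms(2) by simp
  have "P N \<beta> t = 1" unfolding P_def N1 by simp
  moreover have "c3 N \<beta> > 0"
  proof -
    have "c3 N \<beta> = (\<beta> / 8 - 1) / 2 + 3/8 * \<beta> + 3/2" unfolding c3_def N1 by simp
    moreover have "(\<beta> / 8 - 1) / 2 = \<beta> / 16 - 1 / 2" by (simp add: field_simps)
    ultimately show ?thesis using assms(1) by linarith
  qed
  moreover have "W 0 = 0" unfolding W_def by simp
  ultimately show ?thesis using True N1 by simp
next
  case False
  define T where "T = \<bar>t\<bar>"
  have T: "T > 0" using False T_def by simp
  have tT: "t^2 = T^2" unfolding T_def by simp
  let ?a = "\<lambda>j::nat. real j * \<beta> / 2"
  let ?K = "\<lambda>j::nat. {1..nat \<lfloor>real j * \<beta> / 2\<rfloor>}"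
  have a0: "\<And>j. 0 \<le> ?a j" using assms(1) by simp
  have fac: "\<And>j k. k \<in> ?K j \<Longrightarrow>
     (cmod ((1 + \<i> * of_real t + of_real (real j * \<beta> / 2 - real k))
        * of_real (1 + real j * \<beta> / 2 - real k)
      / (1 + \<i> * of_real t / 2 + of_real (real j * \<beta> / 2 - real k))^2))^2
     = 1 + phi T (1 + real j * \<beta> / 2 - real k)"
  proof -
    fix j k assume k: "k \<in> ?K j"
    then have k1: "1 \<le> k" "k \<le> nat \<lfloor>real j * \<beta> / 2\<rfloor>" by auto
    then have "int k \<le> \<lfloor>real j * \<beta> / 2\<rfloor>" by linarith
    then have "real k \<le> real j * \<beta> / 2" by (metis le_floor_iff of_int_of_nat_eq)
    then have "1 + real j * \<beta> / 2 - real k > 0" by simp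
    then show "?thesis j k" unfolding T_def by (intro factor) auto
  qed
  have nn: "0 \<le> 1 + phi T x" for x using phi_lower[OF T, of x] by linarith
  have "(cmod (P N \<beta> t))^2 = (\<Prod>j\<in>{1..<N}. \<Prod>k\<in>?K j. 1 + phi T (1 + real j * \<beta> / 2 - real k))"
    unfolding P_def prod_norm[symmetric] prod_power_distrib using fac by simp
  also have "\<dots> \<le> (\<Prod>j\<in>{1..<N}. \<Prod>k\<in>?K j. exp (phi T (1 + real j * \<beta> / 2 - real k)))"
    by (intro prod_mono conjI prod_nonneg ballI nn exp_ge_add_one_self)
  also have "\<dots> = exp (\<Sum>j\<in>{1..<N}. \<Sum>k\<in>?K j. phi T (1 + real j * \<beta> / 2 - real k))"
    by (simp add: exp_sum)
  also have "\<dots> \<le> exp (RR T \<beta> (real N) + 2 * c3 N \<beta> * real N)"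
  proof (rule exp_mono)
    have "(\<Sum>j\<in>{1..<N}. \<Sum>k\<in>?K j. phi T (1 + real j * \<beta> / 2 - real k))
        \<le> (\<Sum>j\<in>{1..<N}. gg T (real j * \<beta> / 2) + 7/3)"
      by (intro sum_mono inner_bound[OF T] a0)
    also have "\<dots> = (\<Sum>j\<in>{1..<N}. gg T (real j * \<beta> / 2)) + 7/3 * (real N - 1)"
      using assms(2) by (simp add: sum.distrib of_nat_diff)
    also have "\<dots> \<le> RR T \<beta> (real N) + real N * \<beta> / 2 + 7/3 * (real N - 1)"
      using outer_bound[OF T assms(1), of N] by simp
    also have "\<dots> \<le> RR T \<beta> (real N) + 2 * c3 N \<beta> * real N"
    proof -
      have f1: "2 * c3 N \<beta> * real N = (\<beta> / 8 - 1) + 3/4 * (real N * \<beta>) + 3 * real N"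
        unfolding c3_def using assms(2) by (simp add: field_simps)
      have f2: "0 \<le> real N * \<beta>" using assms(1) by simp
      have f3: "real N \<ge> 1" using assms(2) by simp
      have f4: "7/3 * (real N - 1) = 7/3 * real N - 7/3" by (simp only: right_diff_distrib mult_1_right)
      show ?thesis unfolding f1 f4 using f2 f3 assms(1) by linarith
    qed
    finally show "(\<Sum>j\<in>{1..<N}. \<Sum>k\<in>?K j. phi T (1 + real j * \<beta> / 2 - real k))
        \<le> RR T \<beta> (real N) + 2 * c3 N \<beta> * real N" .
  qed
  also have "\<dots> = exp (- (1 / (2 * \<beta>)) * t^2 * W (real N * \<beta> / (2 * \<bar>t\<bar>))) * exp (2 * c3 N \<beta> * real N)"
    unfolding RR_def exp_add tT T_def ..
  finally show ?thesis .
qed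

end
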